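(* Let $w\in\mathbb R^5$ and suppose $\Sigma^w(\mathbf R_i)\ge\Sigma^w(\mathbf I)$ for all $1\le i\le 5$. Then for every reduced word $\mathbf U=\mathbf R_i\mathbf U'$ over $\{\mathbf R_1,\dots,\mathbf R_5\}$ (evaluated as a product of matrices), $\Sigma^w(\mathbf U)\ge\Sigma^w(\mathbf U')$.
   Context: Let $\mathbf e\in\mathbb R^5$ be the all-ones vector, $\mathbf e_i$ the $i$-th standard basis vector, $\mathbf I$ the $5\times5$ identity. For $1\le i\le 5$, $\mathbf R_i=\mathbf I+\mathbf e_i\mathbf e^\intercal-3\mathbf e_i\mathbf e_i^\intercal$ (the matrix equal to $\mathbf I$ except that its $i$-th row has diagonal entry $-1$ and all off-diagonal entries $1$). For a $5\times 5$ matrix $\mathbf U$, its weighted mass is $\Sigma^w(\mathbf U)=\mathbf e^\intercal\mathbf U w$. A word $\mathbf U_1\mathbf U_2\cdots\mathbf U_n$ with letters in $\{\mathbf R_1,\dots,\mathbf R_5\}$ is reduced if it contains no (consecutive) subword of the form $\mathbf R_i\mathbf R_i$, and no subword $\mathbf V_1\mathbf V_2\cdots\mathbf V_{2m}$ with $m\ge2$, $\mathbf V_1=\mathbf V_3$, $\mathbf V_{2m-2}=\mathbf V_{2m}$ and $\mathbf V_{2j}=\mathbf V_{2j+3}$ for $1\le j\le m-2$ (in particular no subword $(\mathbf R_i\mathbf R_j)^2$). *)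

theory Defs
  imports "HOL-Analysis.Analysis" "HOL-Library.Numeral_Type"
begin

type_synonym mat5 = "real ^ 5 ^ 5"

definition ones :: "real ^ 5" where "ones = (\<chi> k. 1)"

definition evec :: "5 \<Rightarrow> real ^ 5" where "evec i = axis i 1"

definition outer :: "real ^ 5 \<Rightarrow> real ^ 5 \<Rightarrow> mat5" where
  "outer u v = (\<chi> r c. u $ r * v $ c)"

definition Rmat :: "5 \<Rightarrow> mat5" where
  "Rmat i = mat 1 + outer (evec i) ones - 3 *\<^sub>R outer (evec i) (evec i)"

definition wmass :: "real ^ 5 \<Rightarrow> mat5 \<Rightarrow> real" where
  "wmass w U = ones \<bullet> (U *v w)"

definition word_mat :: "5 list \<Rightarrow> mat5" where
  "word_mat ws = foldr (\<lambda>i M. Rmat i ** M) ws (mat 1)"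

text \<open>Forbidden pattern V_1 ... V_{2m}, m >= 2 (V_k = vs ! (k-1)).\<close>
definition forbidden_pattern :: "5 list \<Rightarrow> bool" where
  "forbidden_pattern vs \<longleftrightarrow> (\<exists>m::nat. m \<ge> 2 \<and> length vs = 2 * m \<and>
      vs ! 0 = vs ! 2 \<and> vs ! (2*m - 3) = vs ! (2*m - 1) \<and>
      (\<forall>j. 1 \<le> j \<and> j \<le> m - 2 \<longrightarrow> vs ! (2*j - 1) = vs ! (2*j + 2)))"

definition reduced :: "5 list \<Rightarrow> bool" where
  "reduced ws \<longleftrightarrow>
     \<not> (\<exists>a x c. ws = a @ [x, x] @ c) \<and>
     \<not> (\<exists>a v c. ws = a @ v @ c \<and> forbidden_pattern v)"

end

theory Submission
  imports Defs
begin

definition ssum :: "real^5 \<Rightarrow> real" where "ssum x = (\<Sum>k\<in>UNIV. x$k)"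

lemma Rmat_entry: "Rmat b $ k $ j = (if k = j then 1 else 0) + (if k = b then 1 else 0) - (if k = b \<and> j = b then 3 else 0)"
  unfolding Rmat_def outer_def evec_def ones_def axis_def mat_def by auto

lemma Rmat_mv: "(Rmat b *v x)$k = x$k + (if k = b then ssum x - 3 * x$b else 0)"
proof -
  have "(Rmat b *v x)$k = (\<Sum>j\<in>UNIV. ((if k = j then 1 else 0) + (if k = b then 1 else 0) - (if k = b \<and> j = b then 3 else 0)) * x$j)"
    unfolding matrix_vector_mult_def by (simp add: Rmat_entry)
  also have "\<dots> = (\<Sum>j\<in>UNIV. (if k = j then x$j else 0)) + (\<Sum>j\<in>UNIV. (if k = b then x$j else 0)) - (\<Sum>j\<in>UNIV. (if k = b \<and> j = b then 3 * x$j else 0))"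
    unfolding sum_subtractf[symmetric] sum.distrib[symmetric] by (rule sum.cong) (auto simp: algebra_simps)
  also have "\<dots> = x$k + (if k = b then ssum x - 3 * x$b else 0)"
    by (auto simp: ssum_def)
  finally show ?thesis .
qed

lemma ssum_R: "ssum (Rmat b *v x) = 2 * ssum x - 3 * x$b"
proof -
  have "ssum (Rmat b *v x) = (\<Sum>k\<in>UNIV. x$k + (if k = b then ssum x - 3 * x$b else 0))"
    unfolding ssum_def[of "Rmat b *v x"] by (simp add: Rmat_mv)
  also have "\<dots> = ssum x + (ssum x - 3 * x$b)"
    by (simp add: sum.distrib ssum_def)
  finally show ?thesis by simp
qed

lemma word_mat_Cons: "word_mat (b#s) = Rmat b ** word_mat s"
  unfolding word_mat_def by simp

lemma word_mat_Nil: "word_mat [] = mat 1" unfolding word_mat_def by simp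

definition gg :: "real^5 \<Rightarrow> 5 list \<Rightarrow> 5 \<Rightarrow> real" where
  "gg w ws k = ssum (word_mat ws *v w) - 3 * (word_mat ws *v w) $ k"

lemma gg_Cons: "gg w (b#s) k = (if k = b then - gg w s b else gg w s k + gg w s b)"
  unfolding gg_def word_mat_Cons matrix_vector_mul_assoc[symmetric] ssum_R Rmat_mv
  by (auto simp: algebra_simps)

lemma wmass_ssum: "wmass w U = ssum (U *v w)"
  unfolding wmass_def ssum_def ones_def inner_vec_def by simp

lemma wmass_diff: "wmass w (word_mat (i#ws)) - wmass w (word_mat ws) = gg w ws i"
  unfolding wmass_ssum gg_def word_mat_Cons matrix_vector_mul_assoc[symmetric] ssum_R by simp

lemma gg_Nil: "gg w [] i = wmass w (Rmat i) - wmass w (mat 1)"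
  using wmass_diff[of w i "[]"] by (simp add: word_mat_Nil word_mat_Cons)



definition Dc :: "5 list \<Rightarrow> bool" where
  "Dc s \<longleftrightarrow> (\<exists>n. 2*n+3 \<le> length s \<and> s!(2*n) = s!(2*n+2) \<and> (\<forall>i<n. s!(2*i) = s!(2*i+3)))"

lemma nth_CC: "(x#y#r)!(k+2) = r!k" by simp

lemma Dc_short: "length s < 3 \<Longrightarrow> \<not> Dc s"
  unfolding Dc_def by auto

lemma Dc_Cons3: "Dc (x#y#z#t) \<longleftrightarrow> x = z \<or> (Dc (z#t) \<and> x = t!0)"
proof
  assume "Dc (x#y#z#t)"
  then obtain n where n: "2*n+3 \<le> length (x#y#z#t)" "(x#y#z#t)!(2*n) = (x#y#z#t)!(2*n+2)"
    "\<forall>i<n. (x#y#z#t)!(2*i) = (x#y#z#t)!(2*i+3)" unfolding Dc_def by blast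
  show "x = z \<or> (Dc (z#t) \<and> x = t!0)"
  proof (cases n)
    case 0 then show ?thesis using n by simp
  next
    case (Suc m)
    have a: "x = t!0" using n(3)[rule_format, of 0] Suc by simp
    have b: "2*m+3 \<le> length (z#t)" using n(1) Suc by simp
    have c: "(z#t)!(2*m) = (z#t)!(2*m+2)"
      using n(2) Suc nth_CC[of x y "z#t" "2*m"] nth_CC[of x y "z#t" "2*m+2"]
      by (simp add: algebra_simps)
    have d: "\<forall>i<m. (z#t)!(2*i) = (z#t)!(2*i+3)"
    proof (intro allI impI)
      fix i assume "i<m"
      then have h: "(x#y#z#t)!(2*(Suc i)) = (x#y#z#t)!(2*(Suc i)+3)" using n(3) Suc by blast
      have e1: "(x#y#z#t)!(2*(Suc i)) = (z#t)!(2*i)" by simp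
      have e2: "(x#y#z#t)!(2*(Suc i)+3) = (z#t)!(2*i+3)" by simp
      show "(z#t)!(2*i) = (z#t)!(2*i+3)" using h e1 e2 by simp
    qed
    show ?thesis using a b c d unfolding Dc_def by blast
  qed
next
  assume "x = z \<or> (Dc (z#t) \<and> x = t!0)"
  then show "Dc (x#y#z#t)"
  proof
    assume "x = z" then show ?thesis unfolding Dc_def by (intro exI[of _ 0]) simp
  next
    assume h: "Dc (z#t) \<and> x = t!0"
    then obtain m where m: "2*m+3 \<le> length (z#t)" "(z#t)!(2*m) = (z#t)!(2*m+2)"
      "\<forall>i<m. (z#t)!(2*i) = (z#t)!(2*i+3)" unfolding Dc_def by blast
    have "\<forall>i<Suc m. (x#y#z#t)!(2*i) = (x#y#z#t)!(2*i+3)"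
    proof (intro allI impI)
      fix i assume i: "i < Suc m"
      show "(x#y#z#t)!(2*i) = (x#y#z#t)!(2*i+3)"
      proof (cases i)
        case 0 then show ?thesis using h by simp
      next
        case (Suc j)
        then have "(z#t)!(2*j) = (z#t)!(2*j+3)" using m(3) i by simp
        then show ?thesis using Suc
          nth_CC[of x y "z#t" "2*j"] nth_CC[of x y "z#t" "2*j+3"] by (simp add: algebra_simps)
      qed
    qed
    moreover have "(x#y#z#t)!(2*Suc m) = (x#y#z#t)!(2*Suc m+2)"
      using m(2) nth_CC[of x y "z#t" "2*m"] nth_CC[of x y "z#t" "2*m+2"] by (simp add: algebra_simps)
    moreover have "2*Suc m+3 \<le> length (x#y#z#t)" using m(1) by simp
    ultimately show ?thesis unfolding Dc_def by blast
  qed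
qed

lemma sq_Cons: "(\<exists>a x cc. c#s = a @ [x, x] @ cc) \<longleftrightarrow>
   (\<exists>a x cc. s = a @ [x, x] @ cc) \<or> (s \<noteq> [] \<and> c = hd s)"
proof
  assume "\<exists>a x cc. c#s = a @ [x, x] @ cc"
  then obtain a x cc where h: "c#s = a @ [x, x] @ cc" by blast
  show "(\<exists>a x cc. s = a @ [x, x] @ cc) \<or> (s \<noteq> [] \<and> c = hd s)"
  proof (cases a)
    case Nil then show ?thesis using h by auto
  next
    case (Cons a0 a') then show ?thesis using h by auto
  qed
next
  assume "(\<exists>a x cc. s = a @ [x, x] @ cc) \<or> (s \<noteq> [] \<and> c = hd s)"
  then show "\<exists>a x cc. c#s = a @ [x, x] @ cc"
  proof
    assume "\<exists>a x cc. s = a @ [x, x] @ cc"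
    then obtain a x cc where "s = a @ [x, x] @ cc" by blast
    then have "c#s = (c#a) @ [x,x] @ cc" by simp
    then show ?thesis by blast
  next
    assume "s \<noteq> [] \<and> c = hd s"
    then have "c#s = [] @ [c,c] @ tl s" by (cases s) auto
    then show ?thesis by blast
  qed
qed

lemma fp_len: "forbidden_pattern v \<Longrightarrow> length v \<ge> 4"
  unfolding forbidden_pattern_def by auto

lemma fp_Cons: "(\<exists>a v cc. c#s = a @ v @ cc \<and> forbidden_pattern v) \<longleftrightarrow>
   (\<exists>a v cc. s = a @ v @ cc \<and> forbidden_pattern v) \<or> (\<exists>v cc. s = v @ cc \<and> forbidden_pattern (c#v))"
proof
  assume "\<exists>a v cc. c#s = a @ v @ cc \<and> forbidden_pattern v"
  then obtain a v cc where h: "c#s = a @ v @ cc" "forbidden_pattern v" by blast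
  show "(\<exists>a v cc. s = a @ v @ cc \<and> forbidden_pattern v) \<or> (\<exists>v cc. s = v @ cc \<and> forbidden_pattern (c#v))"
  proof (cases a)
    case Nil
    with h fp_len[OF h(2)] obtain v' where "v = c # v'" "s = v' @ cc" by (cases v) auto
    then show ?thesis using h by auto
  next
    case (Cons a0 a') then show ?thesis using h by auto
  qed
next
  assume "(\<exists>a v cc. s = a @ v @ cc \<and> forbidden_pattern v) \<or> (\<exists>v cc. s = v @ cc \<and> forbidden_pattern (c#v))"
  then show "\<exists>a v cc. c#s = a @ v @ cc \<and> forbidden_pattern v"
  proof
    assume "\<exists>a v cc. s = a @ v @ cc \<and> forbidden_pattern v"
    then obtain a v cc where "s = a @ v @ cc" "forbidden_pattern v" by blast
    then have "c#s = (c#a) @ v @ cc \<and> forbidden_pattern v" by simp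
    then show ?thesis by blast
  next
    assume "\<exists>v cc. s = v @ cc \<and> forbidden_pattern (c#v)"
    then obtain v cc where "s = v @ cc" "forbidden_pattern (c#v)" by blast
    then have "c#s = [] @ (c#v) @ cc \<and> forbidden_pattern (c#v)" by simp
    then show ?thesis by blast
  qed
qed

lemma pref_fp: "(\<exists>v cc. s = v @ cc \<and> forbidden_pattern (c#v)) \<longleftrightarrow> Dc s \<and> c = s!1"
proof
  assume "\<exists>v cc. s = v @ cc \<and> forbidden_pattern (c#v)"
  then obtain v cc where s: "s = v @ cc" and f: "forbidden_pattern (c#v)" by blast
  from f obtain m where m: "m \<ge> 2" "length (c#v) = 2*m" "(c#v)!0 = (c#v)!2"
    "(c#v)!(2*m-3) = (c#v)!(2*m-1)"
    "\<forall>j. 1 \<le> j \<and> j \<le> m - 2 \<longrightarrow> (c#v)!(2*j-1) = (c#v)!(2*j+2)"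
    unfolding forbidden_pattern_def by blast
  define n where "n = m - 2"
  have n: "m = n + 2" using m(1) n_def by simp
  have lv: "length v = 2*n+3" using m(2) n by simp
  have sv: "\<And>k. k < 2*n+3 \<Longrightarrow> s!k = v!k" using s lv by (simp add: nth_append)
  have "c = v!1" using m(3) by (simp add: numeral_2_eq_2)
  then have c1: "c = s!1" using sv[of 1] by simp
  have "(c#v)!(2*m-3) = v!(2*n)" using n by (simp add: numeral_3_eq_3)
  moreover have "(c#v)!(2*m-1) = v!(2*n+2)" using n by (simp add: numeral_3_eq_3)
  ultimately have e: "s!(2*n) = s!(2*n+2)" using m(4) sv[of "2*n"] sv[of "2*n+2"] by simp
  have a: "\<forall>i<n. s!(2*i) = s!(2*i+3)"
  proof (intro allI impI)
    fix i assume i: "i < n"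
    have ij: "1 \<le> i+1 \<and> i+1 \<le> m - 2" using i n by simp
    have "(c#v)!(2*(i+1)-1) = (c#v)!(2*(i+1)+2)" using m(5) ij by blast
    moreover have "(c#v)!(2*(i+1)-1) = v!(2*i)" by simp
    moreover have "(c#v)!(2*(i+1)+2) = v!(2*i+3)" by (simp add: numeral_3_eq_3)
    ultimately show "s!(2*i) = s!(2*i+3)" using sv[of "2*i"] sv[of "2*i+3"] i by simp
  qed
  have "2*n+3 \<le> length s" using s lv by simp
  then show "Dc s \<and> c = s!1" using e a c1 unfolding Dc_def by blast
next
  assume "Dc s \<and> c = s!1"
  then obtain n where n: "2*n+3 \<le> length s" "s!(2*n) = s!(2*n+2)" "\<forall>i<n. s!(2*i) = s!(2*i+3)"
    and c1: "c = s!1" unfolding Dc_def by blast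
  define v where "v = take (2*n+3) s"
  have lv: "length v = 2*n+3" using n(1) v_def by simp
  have sv: "\<And>k. k < 2*n+3 \<Longrightarrow> v!k = s!k" using v_def by simp
  have "forbidden_pattern (c#v)"
    unfolding forbidden_pattern_def
  proof (intro exI[of _ "n+2"] conjI allI impI)
    show "2 \<le> n+2" by simp
    show "length (c#v) = 2*(n+2)" using lv by simp
    have e0: "(c#v)!2 = v!1" by (simp add: numeral_2_eq_2)
    have e1: "v!1 = s!1" by (rule sv) simp
    show "(c#v)!0 = (c#v)!2" unfolding e0 e1 using c1 by simp
    have e2: "(c#v)!(2*(n+2)-3) = v!(2*n)" by (simp add: numeral_3_eq_3)
    have e3: "(c#v)!(2*(n+2)-1) = v!(2*n+2)" by (simp add: numeral_3_eq_3)
    have e4: "v!(2*n) = s!(2*n)" by (rule sv) simp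
    have e5: "v!(2*n+2) = s!(2*n+2)" by (rule sv) simp
    show "(c#v)!(2*(n+2)-3) = (c#v)!(2*(n+2)-1)" unfolding e2 e3 e4 e5 by (rule n(2))
  next
    fix j assume j: "1 \<le> j \<and> j \<le> n+2-2"
    define i where "i = j - 1"
    have i: "j = i+1" "i < n" using j i_def by auto
    have e6: "(c#v)!(2*j-1) = v!(2*i)" using i by simp
    have e7: "(c#v)!(2*j+2) = v!(2*i+3)" using i by (simp add: numeral_3_eq_3)
    have e8: "v!(2*i) = s!(2*i)" by (rule sv) (use i in simp)
    have e9: "v!(2*i+3) = s!(2*i+3)" by (rule sv) (use i in simp)
    show "(c#v)!(2*j-1) = (c#v)!(2*j+2)" unfolding e6 e7 e8 e9 using n(3) i by blast
  qed
  moreover have "s = v @ drop (2*n+3) s" using v_def by simp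
  ultimately show "\<exists>v cc. s = v @ cc \<and> forbidden_pattern (c#v)" by blast
qed

lemma reduced_Cons: "reduced (c#s) \<longleftrightarrow> reduced s \<and> (s \<noteq> [] \<longrightarrow> c \<noteq> hd s) \<and> \<not> (Dc s \<and> c = s!1)"
  unfolding reduced_def sq_Cons fp_Cons pref_fp by blast



fun flip :: "5 list \<Rightarrow> 5 list" where
  "flip (x#y#z#t) = (if x = z then y#x#y#t else y#x#y#tl (flip (z#t)))"
| "flip s = s"

lemma length_flip: "length (flip s) = length s"
  by (induction s rule: flip.induct) auto

lemma gg_congr: "gg w s = gg w s' \<Longrightarrow> gg w (x#s) = gg w (x#s')"
  by (rule ext) (simp add: gg_Cons)

lemma gg_braid: "gg w (x#y#x#t) = gg w (y#x#y#t)"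
  by (rule ext) (auto simp: gg_Cons)

lemma flip_shape: "flip (x#y#z#t) = y # tl (flip (x#y#z#t))"
  by simp

lemma Dc_shape: "Dc s \<Longrightarrow> \<exists>x y z t. s = x#y#z#t"
  using Dc_short[of s] by (cases s rule: flip.cases) auto

lemma gg_flip: "Dc s \<Longrightarrow> gg w (flip s) = gg w s"
proof (induction s rule: flip.induct)
  case (1 x y z t)
  show ?case
  proof (cases "x = z")
    case True then show ?thesis using gg_braid[of w x y t] by simp
  next
    case False
    then have h: "Dc (z#t)" "x = t!0" using 1(2) Dc_Cons3 by auto
    then obtain t0 t1 t' where t: "t = t0#t1#t'" using Dc_shape[of "z#t"] by auto
    have fz: "flip (z#t) = x # tl (flip (z#t))" using t h(2) by simp
    have ih: "gg w (flip (z#t)) = gg w (z#t)" using 1(1)[OF False h(1)] .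
    have "gg w (x#y#z#t) = gg w (x#y#flip (z#t))" using ih by (intro gg_congr) simp
    also have "\<dots> = gg w (x#y#x#tl (flip (z#t)))" using fz by simp
    also have "\<dots> = gg w (y#x#y#tl (flip (z#t)))" by (rule gg_braid)
    finally show ?thesis using False by simp
  qed
qed (auto simp: Dc_def)

lemma CL: "reduced (c#a#s1) \<Longrightarrow> Dc s1 \<Longrightarrow> c = s1!1 \<Longrightarrow> a \<noteq> hd s1 \<Longrightarrow> a \<noteq> c
   \<Longrightarrow> reduced (a # tl (flip s1))"
proof (induction s1 arbitrary: c a rule: flip.induct)
  case (1 b c' z t)
  have cc: "c' = c" using 1(4) by simp
  have r1: "reduced (a#b#c#z#t)" using 1(2) cc reduced_Cons by blast
  have rs1: "reduced (b#c#z#t)" using r1 reduced_Cons by blast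
  show ?case
  proof (cases "b = z")
    case True
    have rt: "reduced (b#t)" "reduced t" using rs1 True reduced_Cons by blast+
    have rcbt: "reduced (c#b#t)" using rs1 True reduced_Cons by blast
    have nD: "\<not> Dc (c#b#t)" using rs1 True reduced_Cons[of b "c#b#t"] by simp
    have rct: "reduced (c#t)"
    proof -
      have "t \<noteq> [] \<longrightarrow> c \<noteq> hd t"
      proof
        assume "t \<noteq> []"
        then obtain t0 t' where "t = t0#t'" by (cases t) auto
        then show "c \<noteq> hd t" using nD Dc_Cons3[of c b t0 t'] by auto
      qed
      moreover have "\<not> (Dc t \<and> c = t!1)"
      proof
        assume h: "Dc t \<and> c = t!1"
        then obtain t0 t' where t: "t = t0#t'" using Dc_shape by blast
        then show False using h nD Dc_Cons3[of c b t0 t'] by auto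
      qed
      ultimately show ?thesis using rt(2) reduced_Cons by blast
    qed
    have rbct: "reduced (b#c#t)"
    proof -
      have "b \<noteq> c" using rs1 reduced_Cons by auto
      moreover have "\<not> (Dc (c#t) \<and> b = t!0)"
      proof
        assume h: "Dc (c#t) \<and> b = t!0"
        then obtain t0 t' where t: "t = t0#t'" using Dc_shape[of "c#t"] by auto
        then have "reduced (b#b#t')" using rt(1) h by simp
        then show False using reduced_Cons by auto
      qed
      ultimately show ?thesis using rct reduced_Cons by auto
    qed
    have "reduced (a#b#c#t)"
    proof -
      have "a \<noteq> b" using 1(5) by simp
      moreover have "a \<noteq> c" using 1(6) .
      ultimately show ?thesis using rbct reduced_Cons by auto
    qed
    then show ?thesis using True cc by simp
  next
    case False
    have h: "Dc (z#t)" "b = t!0" using 1(3) False Dc_Cons3 by auto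
    then obtain t0 t1 t' where t: "t = t0#t1#t'" using Dc_shape[of "z#t"] by auto
    have bt0: "b = t0" using h t by simp
    have rct0: "reduced (c # tl (flip (z#t)))"
    proof (rule 1(1)[OF False])
      show "reduced (b#c#z#t)" using rs1 .
      show "Dc (z#t)" using h(1) .
      show "b = (z#t)!1" using bt0 t by simp
      have "reduced (c#z#t)" using rs1 reduced_Cons by blast
      then show "c \<noteq> hd (z#t)" using reduced_Cons[of c "z#t"] by simp
      show "c \<noteq> b" using rs1 reduced_Cons by auto
    qed
    obtain R where fz: "flip (z#t) = t0 # z # R" using t by (cases "z = t1") auto
    have rc: "reduced (c # z # R)" using rct0 fz by simp
    have rb: "reduced (b # c # z # R)"
    proof -
      have "b \<noteq> c" using rs1 reduced_Cons by auto
      moreover have "b \<noteq> z" using False .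
      ultimately show ?thesis using rc reduced_Cons[of b "c # z # R"] by auto
    qed
    have ra: "reduced (a # b # c # z # R)"
    proof -
      have "a \<noteq> b" using 1(5) by simp
      moreover have "a \<noteq> c" using 1(6) .
      ultimately show ?thesis using rb reduced_Cons[of a "b # c # z # R"] by auto
    qed
    have "tl (flip (b#c'#z#t)) = b#c#z#R" using False cc fz by simp
    then show ?thesis using ra by simp
  qed
qed (auto simp: Dc_def)

lemma main_pos:
  assumes nn: "\<And>k. gg w [] k \<ge> 0"
  shows "reduced (c#s) \<Longrightarrow> gg w s c \<ge> 0"
proof (induction s arbitrary: c rule: length_induct)
  case (1 s)
  note IH = 1(1)[rule_format]
  show ?case
  proof (cases s)
    case Nil then show ?thesis using nn by simp
  next
    case (Cons a s1)
    have R: "reduced (c#a#s1)" using 1(2) Cons by simp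
    have ra: "reduced (a#s1)" and ca: "c \<noteq> a" and nDa: "\<not> (Dc (a#s1) \<and> c = s1!0)"
      using R reduced_Cons[of c "a#s1"] by auto
    have rs1: "reduced s1" using ra reduced_Cons by blast
    have an: "s1 \<noteq> [] \<longrightarrow> a \<noteq> hd s1" using ra reduced_Cons by blast
    have ga: "gg w s1 a \<ge> 0" using IH[of s1 a] ra Cons by simp
    have split: "gg w (a#s1) c = gg w s1 c + gg w s1 a" using ca by (simp add: gg_Cons)
    show ?thesis
    proof (cases "reduced (c#s1)")
      case True
      then have "gg w s1 c \<ge> 0" using IH[of s1 c] Cons by simp
      then show ?thesis using split ga Cons by simp
    next
      case False
      then have cases: "(Dc s1 \<and> c = s1!1) \<or> (s1 \<noteq> [] \<and> c = hd s1)"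
        using rs1 reduced_Cons[of c s1] by blast
      show ?thesis
      proof (cases "Dc s1 \<and> c = s1!1")
        case True
        then obtain b c' z t where s1: "s1 = b#c'#z#t" using Dc_shape by blast
        have cc: "c' = c" using True s1 by simp
        define f where "f = tl (flip s1)"
        have fs: "flip s1 = c # f" using s1 cc f_def flip_shape[of b c' z t] by simp
        have "gg w (a#s1) = gg w (a#flip s1)" using gg_flip[of s1 w] True by (intro gg_congr) simp
        then have "gg w (a#s1) c = gg w (a#c#f) c" using fs by simp
        also have "\<dots> = gg w f a" using ca by (simp add: gg_Cons)
        finally have eq: "gg w (a#s1) c = gg w f a" .
        have rf: "reduced (a#f)" unfolding f_def
          using CL[of c a s1] R True an ca s1 by simp
        have "length f < length s" using Cons f_def length_flip[of s1] s1 by simp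
        then have "gg w f a \<ge> 0" using IH[of f a] rf by simp
        then show ?thesis using eq Cons by simp
      next
        case False
        then obtain s2 where s1: "s1 = c#s2" using cases by (cases s1) auto
        have eq: "gg w (a#c#s2) c = gg w s2 a" using ca by (simp add: gg_Cons)
        have rs2: "reduced s2" using rs1 s1 reduced_Cons by blast
        have r2: "reduced (a#s2)"
        proof -
          have "s2 \<noteq> [] \<longrightarrow> a \<noteq> hd s2"
          proof
            assume "s2 \<noteq> []"
            then obtain y t where "s2 = y#t" by (cases s2) auto
            then show "a \<noteq> hd s2" using R s1 reduced_Cons[of c "a#c#s2"] Dc_Cons3[of a c y t] by auto
          qed
          moreover have "\<not> (Dc s2 \<and> a = s2!1)"
          proof
            assume h: "Dc s2 \<and> a = s2!1"
            then obtain y t where "s2 = y#t" using Dc_shape by blast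
            then show False using h R s1 reduced_Cons[of c "a#c#s2"] Dc_Cons3[of a c y t] by auto
          qed
          ultimately show ?thesis using rs2 reduced_Cons by blast
        qed
        have "gg w s2 a \<ge> 0" using IH[of s2 a] r2 Cons s1 by simp
        then show ?thesis using eq Cons s1 by simp
      qed
    qed
  qed
qed

theorem lemma4p4:
  fixes w :: "real ^ 5" and i :: 5 and ws :: "5 list"
  assumes "\<forall>k::5. wmass w (Rmat k) \<ge> wmass w (mat 1)"
    and "reduced (i # ws)"
  shows "wmass w (word_mat (i # ws)) \<ge> wmass w (word_mat ws)"
proof -
  have nn: "\<And>k. gg w [] k \<ge> 0" using assms(1) gg_Nil by simp
  have "gg w ws i \<ge> 0" using main_pos[OF nn assms(2)] .
  then show ?thesis using wmass_diff[of w i ws] by simp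
qed

end
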